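(* Let $K$ be a differential field of characteristic $0$ with algebraically closed field of constants $C_K$. Then $K^{PV_\infty}$ is algebraically closed and has no proper Picard–Vessiot extensions.
   Context: Let $K^{diff}$ be a differential closure of $K$ (so $C_{K^{diff}}=C_K$). A Picard–Vessiot (PV) extension of a differential field $F\subseteq K^{diff}$ with algebraically closed constants is a differential field extension of $F$ generated by the entries of some $Z\in GL_n$ with $\partial Z=AZ$, $A$ an $n\times n$ matrix over $F$, having no new constants (inside $K^{diff}$ when $F\subseteq K^{diff}$). $F^{PV}$ is the compositum in $K^{diff}$ of all PV extensions of $F$; $K^{PV_1}=K^{PV}$, $K^{PV_{n+1}}=(K^{PV_n})^{PV}$, and $K^{PV_\infty}=\bigcup_n K^{PV_n}$. *)

theory Defs
  imports "Jordan_Normal_Form.Determinant" "HOL-Library.Poly_Mapping"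
    "HOL-Computational_Algebra.Polynomial"
begin

text \<open>Ambient setting: the whole type 'a (a field of characteristic 0) with a
derivation D plays the role of K^diff; differential subfields are subsets.\<close>

definition derivation :: "('a::field \<Rightarrow> 'a) \<Rightarrow> bool" where
  "derivation D \<longleftrightarrow> (\<forall>x y. D (x + y) = D x + D y) \<and> (\<forall>x y. D (x * y) = x * D y + D x * y)"

definition subfield :: "'a::field set \<Rightarrow> bool" where
  "subfield F \<longleftrightarrow> 0 \<in> F \<and> 1 \<in> F \<and> (\<forall>x\<in>F. \<forall>y\<in>F. x + y \<in> F \<and> x * y \<in> F)
     \<and> (\<forall>x\<in>F. - x \<in> F \<and> inverse x \<in> F)"

definition diff_subfield :: "('a::field \<Rightarrow> 'a) \<Rightarrow> 'a set \<Rightarrow> bool" where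
  "diff_subfield D F \<longleftrightarrow> subfield F \<and> (\<forall>x\<in>F. D x \<in> F)"

definition constants :: "('a::field \<Rightarrow> 'a) \<Rightarrow> 'a set \<Rightarrow> 'a set" where
  "constants D F = {x \<in> F. D x = 0}"

definition alg_closed_set :: "'a::field set \<Rightarrow> bool" where
  "alg_closed_set F \<longleftrightarrow> (\<forall>p. degree p > 0 \<and> (\<forall>i. coeff p i \<in> F) \<longrightarrow> (\<exists>x\<in>F. poly p x = 0))"

text \<open>Differential polynomials in one differential indeterminate y over the
ambient field: finitely supported maps from monomials to coefficients, a
monomial m assigning to each derivative index i the exponent of y^(i).\<close>
type_synonym 'a dpoly = "(nat \<Rightarrow>\<^sub>0 nat) \<Rightarrow>\<^sub>0 'a"

definition dp_eval :: "('a::field \<Rightarrow> 'a) \<Rightarrow> 'a dpoly \<Rightarrow> 'a \<Rightarrow> 'a" where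
  "dp_eval D f a = (\<Sum>m\<in>Poly_Mapping.keys f. Poly_Mapping.lookup f m * (\<Prod>i\<in>Poly_Mapping.keys m. ((D ^^ i) a) ^ Poly_Mapping.lookup m i))"

definition dp_vars :: "'a::zero dpoly \<Rightarrow> nat set" where
  "dp_vars f = (\<Union>m\<in>Poly_Mapping.keys f. Poly_Mapping.keys m)"

text \<open>Blum's axioms for differentially closed fields of characteristic 0:
for differential polynomials f, g with g nonzero and ord g < ord f
(ord of a nonzero constant being -1), there is a with f(a) = 0 and g(a) \<noteq> 0.
(The case ord f = 0, g = 1 gives algebraic closedness.)\<close>
definition diff_closed :: "('a::field \<Rightarrow> 'a) \<Rightarrow> bool" where
  "diff_closed D \<longleftrightarrow> (\<forall>f g::'a dpoly. g \<noteq> 0 \<and> (\<exists>n\<in>dp_vars f. \<forall>j\<in>dp_vars g. j < n)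
      \<longrightarrow> (\<exists>a. dp_eval D f a = 0 \<and> dp_eval D g a \<noteq> 0))"

definition diff_gen :: "('a::field \<Rightarrow> 'a) \<Rightarrow> 'a set \<Rightarrow> 'a set \<Rightarrow> 'a set" where
  "diff_gen D F S = \<Inter>{E. diff_subfield D E \<and> F \<union> S \<subseteq> E}"

definition PV_ext :: "('a::field \<Rightarrow> 'a) \<Rightarrow> 'a set \<Rightarrow> 'a set \<Rightarrow> bool" where
  "PV_ext D F E \<longleftrightarrow> (\<exists>n (A::'a mat) (Z::'a mat).
      A \<in> carrier_mat n n \<and> Z \<in> carrier_mat n n \<and> det Z \<noteq> 0 \<and>
      (\<forall>i<n. \<forall>j<n. A $$ (i, j) \<in> F) \<and>
      map_mat D Z = A * Z \<and>
      E = diff_gen D F {Z $$ (i, j) | i j. i < n \<and> j < n} \<and>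
      constants D E = constants D F)"

definition PV_closure :: "('a::field \<Rightarrow> 'a) \<Rightarrow> 'a set \<Rightarrow> 'a set" where
  "PV_closure D F = diff_gen D F (\<Union>{E. PV_ext D F E})"

primrec PV_tower :: "('a::field \<Rightarrow> 'a) \<Rightarrow> 'a set \<Rightarrow> nat \<Rightarrow> 'a set" where
  "PV_tower D K 0 = K"
| "PV_tower D K (Suc n) = PV_closure D (PV_tower D K n)"

definition PV_infty :: "('a::field \<Rightarrow> 'a) \<Rightarrow> 'a set \<Rightarrow> 'a set" where
  "PV_infty D K = (\<Union>n. PV_tower D K n)"

end

theory Submission imports Defs begin

lemma sf_simps:
  assumes "subfield F"
  shows sf_0: "0 \<in> F" and sf_1: "1 \<in> F"
    and sf_add: "x \<in> F \<Longrightarrow> y \<in> F \<Longrightarrow> x + y \<in> F"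
    and sf_mult: "x \<in> F \<Longrightarrow> y \<in> F \<Longrightarrow> x * y \<in> F"
    and sf_uminus: "x \<in> F \<Longrightarrow> - x \<in> F"
    and sf_inverse: "x \<in> F \<Longrightarrow> inverse x \<in> F"
  using assms unfolding subfield_def by auto

lemma sf_diff: "subfield F \<Longrightarrow> x \<in> F \<Longrightarrow> y \<in> F \<Longrightarrow> x - y \<in> F"
  using sf_add[of F x "-y"] sf_uminus[of F y] by simp

lemma sf_divide: "subfield F \<Longrightarrow> x \<in> F \<Longrightarrow> y \<in> F \<Longrightarrow> x / y \<in> F"
  using sf_mult[of F x "inverse y"] sf_inverse[of F y] by (simp add: divide_inverse)

lemma sf_sum: "subfield F \<Longrightarrow> (\<And>i. i \<in> A \<Longrightarrow> f i \<in> F) \<Longrightarrow> sum f A \<in> F"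
  by (induction A rule: infinite_finite_induct) (auto intro: sf_0 sf_add)

lemma sf_prod: "subfield F \<Longrightarrow> (\<And>i. i \<in> A \<Longrightarrow> f i \<in> F) \<Longrightarrow> prod f A \<in> F"
  by (induction A rule: infinite_finite_induct) (auto intro: sf_1 sf_mult)

lemma sf_of_nat: "subfield F \<Longrightarrow> of_nat n \<in> F"
  by (induction n) (auto intro: sf_0 sf_1 sf_add)

lemma sf_power: "subfield F \<Longrightarrow> x \<in> F \<Longrightarrow> x ^ n \<in> F"
  by (induction n) (auto intro: sf_1 sf_mult)

definition fp :: "'a::field set \<Rightarrow> 'a poly \<Rightarrow> bool" where
  "fp F p \<longleftrightarrow> (\<forall>i. coeff p i \<in> F)"

lemma fp_0: "subfield F \<Longrightarrow> fp F 0" by (simp add: fp_def sf_0)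
lemma fp_pCons: "fp F (pCons a p) \<longleftrightarrow> a \<in> F \<and> fp F p"
  unfolding fp_def by (auto simp: coeff_pCons split: nat.splits)
lemma fp_const: "subfield F \<Longrightarrow> a \<in> F \<Longrightarrow> fp F [:a:]"
  by (simp add: fp_pCons fp_0)
lemma fp_add: "subfield F \<Longrightarrow> fp F p \<Longrightarrow> fp F q \<Longrightarrow> fp F (p + q)"
  by (simp add: fp_def sf_add)
lemma fp_uminus: "subfield F \<Longrightarrow> fp F p \<Longrightarrow> fp F (- p)"
  by (simp add: fp_def sf_uminus)
lemma fp_diff: "subfield F \<Longrightarrow> fp F p \<Longrightarrow> fp F q \<Longrightarrow> fp F (p - q)"
  by (simp add: fp_def sf_diff)
lemma fp_smult: "subfield F \<Longrightarrow> a \<in> F \<Longrightarrow> fp F p \<Longrightarrow> fp F (smult a p)"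
  by (simp add: fp_def sf_mult)
lemma fp_mult: "subfield F \<Longrightarrow> fp F p \<Longrightarrow> fp F q \<Longrightarrow> fp F (p * q)"
  unfolding fp_def coeff_mult by (auto intro!: sf_sum sf_mult)
lemma fp_monom: "subfield F \<Longrightarrow> a \<in> F \<Longrightarrow> fp F (monom a n)"
  by (simp add: fp_def coeff_monom sf_0)
lemma fp_pderiv: "subfield F \<Longrightarrow> fp F p \<Longrightarrow> fp F (pderiv p)"
  unfolding fp_def coeff_pderiv by (auto intro!: sf_mult sf_of_nat sf_add sf_1)
lemma fp_map: "diff_subfield D F \<Longrightarrow> D 0 = 0 \<Longrightarrow> fp F p \<Longrightarrow> fp F (map_poly D p)"
  unfolding fp_def diff_subfield_def by (simp add: coeff_map_poly)

lemma division_exists: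
  fixes x y :: "'a::field poly"
  assumes F: "subfield F" and y: "y \<noteq> 0" "fp F y" and x: "fp F x"
  shows "\<exists>q r. fp F q \<and> fp F r \<and> x = q * y + r \<and> (r = 0 \<or> degree r < degree y)"
  using x
proof (induction x rule: pCons_induct)
  case 0
  then show ?case by (intro exI[of _ 0]) (auto simp: fp_0 F)
next
  case (pCons a x)
  from pCons.prems have a: "a \<in> F" and fx: "fp F x" by (auto simp: fp_pCons)
  from pCons.IH[OF fx] obtain q r where qr: "fp F q" "fp F r" "x = q * y + r" "r = 0 \<or> degree r < degree y"
    by blast
  define b where "b = coeff (pCons a r) (degree y) / lead_coeff y"
  define r' where "r' = pCons a r - smult b y"
  have "fp F (pCons a r)" using a qr by (simp add: fp_pCons)
  then have bF: "b \<in> F" unfolding b_def using y F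
    by (intro sf_divide) (auto simp: fp_def)
  have deg1: "degree (pCons a r) \<le> degree y"
    using qr(4) by (cases "r = 0") (auto simp: degree_pCons_eq_if)
  have dr': "degree r' \<le> degree y" unfolding r'_def
    using deg1 by (intro degree_diff_le) auto
  have cr': "coeff r' (degree y) = 0" unfolding r'_def b_def using y by simp
  have r'd: "r' = 0 \<or> degree r' < degree y"
  proof (cases "r' = 0")
    case False
    then have "degree r' \<noteq> degree y" using cr' by (metis leading_coeff_0_iff)
    then show ?thesis using dr' by simp
  qed simp
  have eq: "pCons a x = pCons b q * y + r'"
    unfolding r'_def qr(3) by (simp add: algebra_simps)
  show ?case
    by (rule exI[of _ "pCons b q"], rule exI[of _ r'])
      (use eq r'd bF qr F a y in \<open>auto simp: fp_pCons r'_def intro!: fp_diff fp_smult\<close>)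
qed


lemma ext_gcd:
  fixes p q :: "'a::field poly"
  assumes F: "subfield F"
  shows "fp F p \<Longrightarrow> fp F q \<Longrightarrow> \<exists>s t g. fp F s \<and> fp F t \<and> fp F g \<and> s * p + t * q = g
     \<and> g dvd p \<and> g dvd q \<and> (p \<noteq> 0 \<longrightarrow> g \<noteq> 0)"
proof (induction "if q = 0 then 0 else Suc (degree q)" arbitrary: p q rule: less_induct)
  case less
  show ?case
  proof (cases "q = 0")
    case True
    have "fp F 1" using fp_const[OF F sf_1[OF F]] by (simp add: pCons_one)
    then show ?thesis using less.prems F True
      by (intro exI[of _ "1::'a poly"] exI[of _ "0::'a poly"] exI[of _ p]) (auto simp: fp_0)
  next
    case False
    obtain d r where dr: "fp F d" "fp F r" "p = d * q + r" "r = 0 \<or> degree r < degree q"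
      using division_exists[OF F False less.prems(2) less.prems(1)] by blast
    have lt: "(if r = 0 then 0 else Suc (degree r)) < (if q = 0 then 0 else Suc (degree q))"
      using dr(4) False by auto
    obtain s t g where stg: "fp F s" "fp F t" "fp F g" "s * q + t * r = g" "g dvd q" "g dvd r"
      "q \<noteq> 0 \<longrightarrow> g \<noteq> 0"
      using less.hyps[OF lt less.prems(2) dr(2)] by blast
    have "g dvd p" using stg(5,6) dr(3) by simp
    moreover have "t * p + (s - t * d) * q = g"
      using stg(4) dr(3) by (simp add: algebra_simps)
    ultimately show ?thesis using stg False dr F
      by (intro exI[of _ t] exI[of _ "s - t * d"] exI[of _ g]) (auto intro: fp_diff fp_mult)
  qed
qed

lemma der_simps:
  assumes "derivation D"
  shows der_add: "D (x + y) = D x + D y" and der_mult: "D (x * y) = x * D y + D x * y"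
  using assms unfolding derivation_def by auto

lemma der_0: "derivation D \<Longrightarrow> D 0 = 0"
  using der_add[of D 0 0] by (metis add_0 add_cancel_right_right)

lemma der_1: "derivation D \<Longrightarrow> D 1 = 0"
  using der_mult[of D 1 1] by (metis mult_1 mult_1_right add_cancel_right_right)

lemma der_power: "derivation D \<Longrightarrow> D (x ^ Suc n) = of_nat (Suc n) * x ^ n * D x"
  by (induction n) (auto simp: der_mult algebra_simps)

lemma der_poly: "derivation D \<Longrightarrow>
   D (poly p x) = poly (map_poly D p) x + poly (pderiv p) x * D x"
proof (induction p)
  case 0
  then show ?case by (simp add: der_0)
next
  case (pCons a p)
  have "map_poly D (pCons a p) = pCons (D a) (map_poly D p)"
    using der_0[OF pCons.prems] by (simp add: map_poly_pCons)
  then show ?case using pCons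
    by (simp add: der_add der_mult pderiv_pCons algebra_simps)
qed


lemma ambient_root:
  fixes D :: "'a::field \<Rightarrow> 'a" and p :: "'a poly"
  assumes dc: "diff_closed D" and dp: "degree p > 0"
  shows "\<exists>a. poly p a = 0"
proof -
  define mon :: "nat \<Rightarrow> (nat \<Rightarrow>\<^sub>0 nat)" where "mon k = Poly_Mapping.single 0 k" for k
  have inj: "inj mon"
  proof (rule injI)
    fix i j assume "mon i = mon j"
    then have "Poly_Mapping.lookup (mon i) 0 = Poly_Mapping.lookup (mon j) 0" by (rule arg_cong)
    then show "i = j" unfolding mon_def by (simp only: Poly_Mapping.lookup_single_eq)
  qed
  define d where "d = degree p"
  define f :: "'a dpoly" where "f = (\<Sum>k\<le>d. Poly_Mapping.single (mon k) (coeff p k))"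
  define g :: "'a dpoly" where "g = Poly_Mapping.single 0 1"
  have lf: "Poly_Mapping.lookup f (mon j) = coeff p j" if "j \<le> d" for j
  proof -
    have "Poly_Mapping.lookup f (mon j) = (\<Sum>k\<le>d. if k = j then coeff p k else 0)"
      unfolding f_def lookup_sum lookup_single when_def using inj
      by (intro sum.cong) (auto simp: inj_eq)
    also have "\<dots> = coeff p j" using that by simp
    finally show ?thesis .
  qed
  have kf: "Poly_Mapping.keys f \<subseteq> mon ` {..d}"
  proof -
    have ks: "Poly_Mapping.keys (Poly_Mapping.single (mon k) (coeff p k)) \<subseteq> {mon k}" for k
      by (simp only: keys_single) auto
    show ?thesis
    proof
      fix m assume "m \<in> Poly_Mapping.keys f"
      then have "m \<in> (\<Union>k\<in>{..d}. Poly_Mapping.keys (Poly_Mapping.single (mon k) (coeff p k)))"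
        unfolding f_def using keys_sum[of "\<lambda>k. Poly_Mapping.single (mon k) (coeff p k)" "{..d}"]
        by (rule subsetD[rotated])
      then obtain k where k: "k \<in> {..d}" "m \<in> Poly_Mapping.keys (Poly_Mapping.single (mon k) (coeff p k))"
        by (rule UN_E)
      then have "m = mon k" using ks[of k] by blast
      then show "m \<in> mon ` {..d}" using k(1) by (rule image_eqI)
    qed
  qed
  have km: "Poly_Mapping.keys (mon k) = (if k = 0 then {} else {0})" for k
    unfolding mon_def by simp
  have pm: "(\<Prod>i\<in>Poly_Mapping.keys (mon k). ((D ^^ i) a) ^ Poly_Mapping.lookup (mon k) i) = a ^ k"
    for k a unfolding km by (auto simp: mon_def)
  have fin: "finite (mon ` {..d})" by (rule finite_imageI) (rule finite_atMost)
  have ev: "dp_eval D f a = poly p a" for a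
  proof -
    have "dp_eval D f a = (\<Sum>m\<in>mon ` {..d}. Poly_Mapping.lookup f m *
        (\<Prod>i\<in>Poly_Mapping.keys m. ((D ^^ i) a) ^ Poly_Mapping.lookup m i))"
      unfolding dp_eval_def
    proof (rule sum.mono_neutral_left)
      show "\<forall>i\<in>mon ` {..d} - Poly_Mapping.keys f. Poly_Mapping.lookup f i *
        (\<Prod>ia\<in>Poly_Mapping.keys i. ((D ^^ ia) a) ^ Poly_Mapping.lookup i ia) = 0"
      proof
        fix i assume "i \<in> mon ` {..d} - Poly_Mapping.keys f"
        then have "Poly_Mapping.lookup f i = 0" using in_keys_iff[of i f] by blast
        then show "Poly_Mapping.lookup f i *
        (\<Prod>ia\<in>Poly_Mapping.keys i. ((D ^^ ia) a) ^ Poly_Mapping.lookup i ia) = 0" by (simp only: mult_zero_left)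
      qed
    qed (rule fin, rule kf)
    also have "\<dots> = (\<Sum>k\<in>{..d}. (\<lambda>m. Poly_Mapping.lookup f m *
        (\<Prod>i\<in>Poly_Mapping.keys m. ((D ^^ i) a) ^ Poly_Mapping.lookup m i)) (mon k))"
      by (rule sum.reindex_cong[OF inj_on_subset[OF inj subset_UNIV] refl refl])
    also have "\<dots> = (\<Sum>k\<le>d. coeff p k * a ^ k)"
      by (intro sum.cong refl) (simp only: lf pm atMost_iff)
    also have "\<dots> = poly p a" unfolding d_def by (simp add: poly_altdef)
    finally show ?thesis .
  qed
  have "Poly_Mapping.lookup g 0 = 1" unfolding g_def by (rule Poly_Mapping.lookup_single_eq)
  then have g0: "g \<noteq> 0" by auto
  have kg: "Poly_Mapping.keys g = {0}" unfolding g_def by simp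
  have vg: "dp_vars g = {}" unfolding dp_vars_def kg by simp
  have "p \<noteq> 0" using dp by auto
  then have "Poly_Mapping.lookup f (mon d) \<noteq> 0" using lf[of d] d_def by simp
  then have "mon d \<in> Poly_Mapping.keys f" using in_keys_iff[of "mon d" f] by blast
  then have "0 \<in> dp_vars f" unfolding dp_vars_def using km[of d] dp d_def by auto
  then have "g \<noteq> 0 \<and> (\<exists>n\<in>dp_vars f. \<forall>j\<in>dp_vars g. j < n)" using g0 vg by blast
  then have "\<exists>a. dp_eval D f a = 0 \<and> dp_eval D g a \<noteq> 0"
    using dc[unfolded diff_closed_def, rule_format, of g f] by blast
  then show ?thesis using ev by auto
qed


lemma roots_card:
  fixes p :: "'a::field poly"
  assumes AC: "\<And>q::'a poly. degree q > 0 \<Longrightarrow> \<exists>a. poly q a = 0"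
  shows "p \<noteq> 0 \<Longrightarrow> (\<forall>r. poly p r = 0 \<longrightarrow> poly (pderiv p) r \<noteq> 0) \<Longrightarrow> card {r. poly p r = 0} = degree p"
proof (induction "degree p" arbitrary: p)
  case 0
  then have "{r. poly p r = 0} = {}" by (auto elim: degree_eq_zeroE)
  then show ?case using 0 by simp
next
  case (Suc n)
  obtain r where r: "poly p r = 0" using AC[of p] Suc.hyps(2) by auto
  then have "[:-r, 1:] dvd p" by (simp add: dvd_iff_poly_eq_0)
  then obtain p1 where p1: "p = [:-r, 1:] * p1" by (elim dvdE)
  have p10: "p1 \<noteq> 0" using Suc.prems p1 by auto
  have "degree p = degree [:-r, 1:] + degree p1" unfolding p1 by (rule degree_mult_eq) (use p10 in auto)
  then have dp1: "degree p1 = n" using Suc.hyps(2) by simp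
  have "pderiv p = [:-r,1:] * pderiv p1 + p1 * pderiv [:-r,1:]" unfolding p1 by (rule pderiv_mult)
  moreover have "pderiv [:-r,1:] = (1::'a poly)" by (simp add: pderiv_pCons)
  ultimately have pd: "pderiv p = p1 + [:-r, 1:] * pderiv p1" by (simp add: add.commute)
  have simple: "\<forall>s. poly p1 s = 0 \<longrightarrow> poly (pderiv p1) s \<noteq> 0"
  proof (intro allI impI)
    fix s assume s: "poly p1 s = 0"
    then have "poly p s = 0" unfolding p1 by simp
    then have "poly (pderiv p) s \<noteq> 0" using Suc.prems by blast
    then show "poly (pderiv p1) s \<noteq> 0" unfolding pd using s by simp
  qed
  have rn: "poly p1 r \<noteq> 0"
  proof
    assume "poly p1 r = 0"
    then have "poly (pderiv p) r = 0" unfolding pd by simp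
    then show False using Suc.prems r by blast
  qed
  have eq: "{s. poly p s = 0} = insert r {s. poly p1 s = 0}"
    unfolding p1 by auto
  have "card {s. poly p1 s = 0} = n" using Suc.hyps(1)[OF dp1[symmetric] p10 simple] dp1 by simp
  moreover have "finite {s. poly p1 s = 0}" using p10 by (rule poly_roots_finite)
  ultimately show ?case unfolding eq using rn Suc.hyps(2) by simp
qed

lemma vandermonde_nz:
  fixes r :: "nat \<Rightarrow> 'a::field"
  assumes inj: "inj_on r {..<d}"
  shows "det (mat d d (\<lambda>(i, k). r k ^ i)) \<noteq> 0"
proof
  define Z where "Z = mat d d (\<lambda>(i, k). r k ^ i)"
  assume "det (mat d d (\<lambda>(i, k). r k ^ i)) = 0"
  then have "det (transpose_mat Z) = 0" unfolding Z_def by (subst det_transpose) auto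
  then obtain v where v: "v \<in> carrier_vec d" "v \<noteq> 0\<^sub>v d" "transpose_mat Z *\<^sub>v v = 0\<^sub>v d"
    using det_0_iff_vec_prod_zero_field[of "transpose_mat Z" d] unfolding Z_def by auto
  define q where "q = (\<Sum>i<d. monom (v $ i) i)"
  have cq: "coeff q n = (if n < d then v $ n else 0)" for n
    unfolding q_def coeff_sum coeff_monom by (auto simp: sum.delta)
  obtain j where j: "j < d" "v $ j \<noteq> 0" using v(1,2)
    by (metis carrier_vecD eq_vecI index_zero_vec)
  have q0: "q \<noteq> 0" using cq[of j] j by auto
  have dq: "degree q < d"
  proof -
    have "degree q \<le> d - 1" by (rule degree_le) (auto simp: cq)
    then show ?thesis using j by linarith
  qed
  have roots: "poly q (r k) = 0" if k: "k < d" for k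
  proof -
    have "(transpose_mat Z *\<^sub>v v) $ k = 0" using v(3) k by simp
    moreover have "(transpose_mat Z *\<^sub>v v) $ k = (\<Sum>i<d. r k ^ i * v $ i)"
      using k v(1) unfolding Z_def by (auto intro!: sum.cong simp: lessThan_atLeast0 scalar_prod_def)
    moreover have "poly q (r k) = (\<Sum>i<d. r k ^ i * v $ i)"
      unfolding q_def poly_sum poly_monom by (simp add: mult.commute)
    ultimately show ?thesis by simp
  qed
  have "r ` {..<d} \<subseteq> {x. poly q x = 0}" using roots by auto
  then have "card (r ` {..<d}) \<le> card {x. poly q x = 0}"
    by (intro card_mono poly_roots_finite q0)
  also have "\<dots> \<le> degree q" by (rule card_poly_roots_bound[OF q0])
  finally show False using card_image[OF inj] dq by simp
qed


lemma diff_subfield_UNIV: "diff_subfield D UNIV"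
  unfolding diff_subfield_def subfield_def by auto

lemma diff_subfield_Inter:
  assumes "\<And>E. E \<in> S \<Longrightarrow> diff_subfield D E"
  shows "diff_subfield D (\<Inter>S)"
  using assms unfolding diff_subfield_def subfield_def by blast

lemma diff_gen_sub: "diff_subfield D (diff_gen D F S)"
  unfolding diff_gen_def by (rule diff_subfield_Inter) auto

lemma diff_gen_incl: "F \<union> S \<subseteq> diff_gen D F S"
  unfolding diff_gen_def by auto

lemma diff_gen_least: "diff_subfield D E \<Longrightarrow> F \<union> S \<subseteq> E \<Longrightarrow> diff_gen D F S \<subseteq> E"
  unfolding diff_gen_def by auto

lemma diff_gen_self: "diff_subfield D F \<Longrightarrow> S \<subseteq> F \<Longrightarrow> diff_gen D F S = F"
  using diff_gen_least[of D F F S] diff_gen_incl[of F S D] by auto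

lemma tower_sub: "diff_subfield D K \<Longrightarrow> diff_subfield D (PV_tower D K n)"
  by (cases n) (auto simp: PV_closure_def diff_gen_sub)

lemma tower_Suc: "PV_tower D K n \<subseteq> PV_tower D K (Suc n)"
  using diff_gen_incl by (auto simp: PV_closure_def)

lemma tower_mono: "m \<le> n \<Longrightarrow> PV_tower D K m \<subseteq> PV_tower D K n"
  by (rule lift_Suc_mono_le[of "PV_tower D K", OF tower_Suc])

lemma finite_in_tower:
  assumes "finite A" "A \<subseteq> PV_infty D K"
  shows "\<exists>n. A \<subseteq> PV_tower D K n"
  using assms
proof (induction A rule: finite_induct)
  case empty then show ?case by auto
next
  case (insert x A)
  then obtain n where n: "A \<subseteq> PV_tower D K n" by auto
  from insert.prems obtain m where m: "x \<in> PV_tower D K m" by (auto simp: PV_infty_def)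
  have "A \<subseteq> PV_tower D K (max n m)" using n tower_mono[of n "max n m"] by auto
  moreover have "x \<in> PV_tower D K (max n m)" using m tower_mono[of m "max n m"] by auto
  ultimately show ?case by blast
qed

lemma infty_sub:
  assumes "diff_subfield D K"
  shows "diff_subfield D (PV_infty D K)"
  unfolding diff_subfield_def subfield_def
proof (intro conjI ballI)
  have K: "K \<subseteq> PV_infty D K" unfolding PV_infty_def by (metis PV_tower.simps(1) UN_upper UNIV_I)
  show "0 \<in> PV_infty D K" "1 \<in> PV_infty D K" using K assms
    by (auto simp: diff_subfield_def subfield_def)
  fix x assume x: "x \<in> PV_infty D K"
  then obtain n where n: "x \<in> PV_tower D K n" by (auto simp: PV_infty_def)
  have sn: "diff_subfield D (PV_tower D K n)" by (rule tower_sub[OF assms])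
  have inf: "PV_tower D K k \<subseteq> PV_infty D K" for k by (auto simp: PV_infty_def)
  show "- x \<in> PV_infty D K" "inverse x \<in> PV_infty D K" "D x \<in> PV_infty D K"
    using sn n inf[of n] by (auto simp: diff_subfield_def subfield_def)
  fix y assume y: "y \<in> PV_infty D K"
  obtain k where "{x, y} \<subseteq> PV_tower D K k" using finite_in_tower[of "{x,y}" D K] x y by auto
  moreover have "diff_subfield D (PV_tower D K k)" by (rule tower_sub[OF assms])
  ultimately show "x + y \<in> PV_infty D K" "x * y \<in> PV_infty D K"
    using inf[of k] by (auto simp: diff_subfield_def subfield_def)
qed

lemma pv_in_closure:
  fixes D :: "'a::field \<Rightarrow> 'a"
  assumes F: "diff_subfield D F" and KF: "K \<subseteq> F"
    and cst: "constants D UNIV = constants D K"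
    and A: "A \<in> carrier_mat n n" and Z: "Z \<in> carrier_mat n n" and dZ: "det Z \<noteq> 0"
    and AF: "\<forall>i<n. \<forall>j<n. A $$ (i, j) \<in> F" and eq: "map_mat D Z = A * Z"
  shows "{Z $$ (i, j) | i j. i < n \<and> j < n} \<subseteq> PV_closure D F"
proof -
  define S where "S = {Z $$ (i, j) | i j. i < n \<and> j < n}"
  define E where "E = diff_gen D F S"
  have FE: "F \<subseteq> E" "S \<subseteq> E" using diff_gen_incl[of F S D] unfolding E_def by auto
  have "constants D E = constants D F"
  proof
    show "constants D F \<subseteq> constants D E" using FE by (auto simp: constants_def)
    show "constants D E \<subseteq> constants D F"
    proof
      fix x assume "x \<in> constants D E"
      then have "x \<in> constants D UNIV" "D x = 0" by (auto simp: constants_def)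
      then have "x \<in> K" using cst by (auto simp: constants_def)
      then show "x \<in> constants D F" using KF \<open>D x = 0\<close> by (auto simp: constants_def)
    qed
  qed
  then have "PV_ext D F E" unfolding PV_ext_def E_def S_def using A Z dZ AF eq by blast
  then have "E \<subseteq> PV_closure D F" unfolding PV_closure_def using diff_gen_incl[of F "\<Union>{E. PV_ext D F E}" D]
    by blast
  then show ?thesis using FE S_def by auto
qed


lemma poly_sum_lt:
  fixes R :: "'a::field poly"
  assumes "R = 0 \<or> degree R < d"
  shows "poly R x = (\<Sum>j<d. coeff R j * x ^ j)"
proof (cases "R = 0")
  case False
  then have dR: "degree R < d" using assms by auto
  have "poly R x = (\<Sum>j\<le>degree R. coeff R j * x ^ j)" by (rule poly_altdef)
  also have "\<dots> = (\<Sum>j<d. coeff R j * x ^ j)"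
    by (rule sum.mono_neutral_left) (use dR in \<open>auto simp: coeff_eq_0\<close>)
  finally show ?thesis .
qed simp

lemma main_step:
  fixes D :: "'a::field_char_0 \<Rightarrow> 'a" and p :: "'a poly"
  assumes der: "derivation D" and dc: "diff_closed D"
    and F: "diff_subfield D F" and KF: "K \<subseteq> F"
    and cst: "constants D UNIV = constants D K"
  shows "fp F p \<Longrightarrow> degree p > 0 \<Longrightarrow> \<exists>r\<in>PV_closure D F. poly p r = 0"
proof (induction "degree p" arbitrary: p rule: less_induct)
  case less
  have sF: "subfield F" using F by (simp add: diff_subfield_def)
  have FC: "F \<subseteq> PV_closure D F" unfolding PV_closure_def using diff_gen_incl by blast
  have AC: "\<And>q::'a poly. degree q > 0 \<Longrightarrow> \<exists>a. poly q a = 0" using ambient_root[OF dc] by blast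
  have p0: "p \<noteq> 0" using less.prems by auto
  define p' where "p' = pderiv p"
  have fp': "fp F p'" unfolding p'_def by (rule fp_pderiv[OF sF less.prems(1)])
  have p'0: "p' \<noteq> 0" unfolding p'_def using less.prems(2) by (simp add: pderiv_eq_0_iff)
  have dp': "degree p' < degree p" unfolding p'_def using less.prems(2) by (simp add: degree_pderiv)
  obtain s t g where stg: "fp F s" "fp F t" "fp F g" "s * p + t * p' = g" "g dvd p" "g dvd p'" "g \<noteq> 0"
    using ext_gcd[OF sF less.prems(1) fp'] p0 by blast
  show ?case
  proof (cases "degree g > 0")
    case True
    have "degree g \<le> degree p'" using stg(6) p'0 by (rule dvd_imp_degree_le)
    then have "degree g < degree p" using dp' by simp
    from less.hyps[OF this stg(3) True] obtain r where r: "r \<in> PV_closure D F" "poly g r = 0" by blast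
    from stg(5) obtain u where "p = g * u" by (elim dvdE)
    then have "poly p r = 0" using r by simp
    then show ?thesis using r by blast
  next
    case False
    then obtain c where gc: "g = [:c:]" by (metis degree_eq_zeroE not_gr0)
    have c0: "c \<noteq> 0" using stg(7) gc by auto
    have cF: "c \<in> F" using stg(3) gc by (auto simp: fp_def dest: spec[of _ 0])
    have tp: "poly t x * poly p' x = c" if "poly p x = 0" for x
      using arg_cong[OF stg(4), of "\<lambda>q. poly q x"] that gc by simp
    have simple: "\<forall>x. poly p x = 0 \<longrightarrow> poly (pderiv p) x \<noteq> 0"
      using tp c0 unfolding p'_def by fastforce
    show ?thesis
    proof (cases "degree p = 1")
      case True
      obtain x where x: "poly p x = 0" using AC less.prems(2) by blast
      have "poly p x = (\<Sum>j\<le>1. coeff p j * x ^ j)" using poly_altdef[of p x] True by simp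
      then have e: "coeff p 0 + coeff p 1 * x = 0" using x by simp
      have l: "coeff p 1 \<noteq> 0" using True p0 by (metis leading_coeff_0_iff)
      have "x = - coeff p 0 / coeff p 1" using e l by (simp add: field_simps add_eq_0_iff)
      moreover have "- coeff p 0 / coeff p 1 \<in> F" using less.prems(1) sF
        by (auto simp: fp_def intro!: sf_divide sf_uminus)
      ultimately show ?thesis using x FC by blast
    next
      case False
      define d where "d = degree p"
      have d2: "d \<ge> 2" using False less.prems(2) d_def by simp
      define RT where "RT = {x. poly p x = 0}"
      have cardRT: "card RT = d" unfolding RT_def d_def by (rule roots_card[OF AC p0 simple])
      have finRT: "finite RT" unfolding RT_def by (rule poly_roots_finite[OF p0])
      obtain rr where bij: "bij_betw rr {0..<d} RT" using ex_bij_betw_nat_finite[OF finRT] cardRT by auto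
      have rr_root: "poly p (rr k) = 0" if "k < d" for k
        using bij that unfolding bij_betw_def RT_def by auto
      have inj: "inj_on rr {..<d}" using bij unfolding bij_betw_def by (simp add: atLeast0LessThan)
      define pD where "pD = map_poly D p"
      have fpD: "fp F pD" unfolding pD_def by (rule fp_map[OF F der_0[OF der] less.prems(1)])
      define q where "q = smult (- inverse c) (pD * t)"
      have fq: "fp F q" unfolding q_def using sF cF c0 fpD stg(2)
        by (intro fp_smult fp_mult sf_uminus sf_inverse) auto
      have Dx: "D x = poly q x" if x: "poly p x = 0" for x
      proof -
        have "0 = D (poly p x)" using x der_0[OF der] by simp
        also have "\<dots> = poly pD x + poly p' x * D x" unfolding pD_def p'_def by (rule der_poly[OF der])
        finally have e: "poly p' x * D x = - poly pD x" by (simp add: eq_neg_iff_add_eq_0 add.commute)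
        have "c * D x = poly t x * (poly p' x * D x)" using tp[OF x] by simp
        also have "\<dots> = - poly t x * poly pD x" using e by simp
        finally have "c * D x = - poly t x * poly pD x" .
        then have "D x = - inverse c * (poly pD x * poly t x)" using c0
          by (simp add: field_simps)
        then show ?thesis unfolding q_def by simp
      qed
      have Dpow: "D (x ^ i) = poly (monom (of_nat i) (i - 1) * q) x" if x: "poly p x = 0" for x i
      proof (cases i)
        case 0
        then show ?thesis using der_1[OF der] by simp
      next
        case (Suc j)
        then show ?thesis using der_power[OF der, of x j] Dx[OF x] by (simp add: poly_monom)
      qed
      have "\<forall>i. \<exists>R. fp F R \<and> (R = 0 \<or> degree R < d) \<and> (\<forall>x. poly p x = 0 \<longrightarrow> poly R x = D (x ^ i))"
      proof
        fix i
        have fh: "fp F (monom (of_nat i) (i - 1) * q)"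
          using sF fq by (intro fp_mult fp_monom sf_of_nat) auto
        obtain Q R where QR: "fp F Q" "fp F R" "monom (of_nat i) (i - 1) * q = Q * p + R" "R = 0 \<or> degree R < d"
          using division_exists[OF sF p0 less.prems(1) fh] unfolding d_def by blast
        have "poly R x = D (x ^ i)" if "poly p x = 0" for x
          using Dpow[OF that, of i] arg_cong[OF QR(3), of "\<lambda>h. poly h x"] that by simp
        then show "\<exists>R. fp F R \<and> (R = 0 \<or> degree R < d) \<and> (\<forall>x. poly p x = 0 \<longrightarrow> poly R x = D (x ^ i))"
          using QR by blast
      qed
      then obtain R where R: "\<And>i. fp F (R i)" "\<And>i. R i = 0 \<or> degree (R i) < d"
        "\<And>i x. poly p x = 0 \<Longrightarrow> poly (R i) x = D (x ^ i)"
        by metis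
      define A where "A = mat d d (\<lambda>(i, j). coeff (R i) j)"
      define Z where "Z = mat d d (\<lambda>(i, k). rr k ^ i)"
      have A: "A \<in> carrier_mat d d" and Z: "Z \<in> carrier_mat d d" unfolding A_def Z_def by auto
      have dZ: "det Z \<noteq> 0" unfolding Z_def by (rule vandermonde_nz[OF inj])
      have AF: "\<forall>i<d. \<forall>j<d. A $$ (i, j) \<in> F" unfolding A_def using R(1) by (auto simp: fp_def)
      have eq: "map_mat D Z = A * Z"
      proof (rule eq_matI)
        fix i k assume ik: "i < dim_row (A * Z)" "k < dim_col (A * Z)"
        then have ik': "i < d" "k < d" using A Z by auto
        have "(A * Z) $$ (i, k) = (\<Sum>j\<in>{0..<d}. coeff (R i) j * rr k ^ j)"
          using ik' A Z unfolding A_def Z_def by (auto simp: scalar_prod_def intro!: sum.cong)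
        also have "\<dots> = poly (R i) (rr k)" using poly_sum_lt[OF R(2)[of i], of "rr k"]
          by (simp add: atLeast0LessThan)
        also have "\<dots> = D (rr k ^ i)" by (rule R(3)[OF rr_root[OF ik'(2)]])
        finally show "map_mat D Z $$ (i, k) = (A * Z) $$ (i, k)" using ik' unfolding Z_def by simp
      qed (use A Z in auto)
      have "{Z $$ (i, j) | i j. i < d \<and> j < d} \<subseteq> PV_closure D F"
        by (rule pv_in_closure[OF F KF cst A Z dZ AF eq])
      moreover have "Z $$ (1, 0) = rr 0" unfolding Z_def using d2 by simp
      moreover have "Z $$ (1, 0) \<in> {Z $$ (i, j) | i j. i < d \<and> j < d}"
        using d2 by (intro CollectI exI[of _ 1] exI[of _ 0]) simp
      ultimately have "rr 0 \<in> PV_closure D F" by auto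
      then show ?thesis using rr_root[of 0] d2 by auto
    qed
  qed
qed


theorem lemma1p15:
  fixes D :: "'a::field_char_0 \<Rightarrow> 'a" and K :: "'a set"
  assumes "derivation D"
    and "diff_subfield D K"
    and "alg_closed_set (constants D K)"
    and "diff_closed D"
    and "constants D UNIV = constants D K"
  shows "alg_closed_set (PV_infty D K)
    \<and> (\<forall>E. PV_ext D (PV_infty D K) E \<longrightarrow> E = PV_infty D K)"
proof
  note der = assms(1) and K = assms(2) and dc = assms(4) and cst = assms(5)
  have inf: "PV_tower D K k \<subseteq> PV_infty D K" for k by (auto simp: PV_infty_def)
  have KT: "K \<subseteq> PV_tower D K N" for N using tower_mono[of 0 N D K] by simp
  show "alg_closed_set (PV_infty D K)"
    unfolding alg_closed_set_def
  proof (intro allI impI)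
    fix p :: "'a poly"
    assume p: "0 < degree p \<and> (\<forall>i. coeff p i \<in> PV_infty D K)"
    have "finite (coeff p ` {..degree p})" by simp
    moreover have "coeff p ` {..degree p} \<subseteq> PV_infty D K" using p by auto
    ultimately obtain N where N: "coeff p ` {..degree p} \<subseteq> PV_tower D K N"
      using finite_in_tower by blast
    have sN: "diff_subfield D (PV_tower D K N)" by (rule tower_sub[OF K])
    have "fp (PV_tower D K N) p" unfolding fp_def
    proof
      fix i show "coeff p i \<in> PV_tower D K N"
      proof (cases "i \<le> degree p")
        case True then show ?thesis using N by auto
      next
        case False then have "coeff p i = 0" by (simp add: coeff_eq_0)
        then show ?thesis using sN by (simp add: diff_subfield_def subfield_def)
      qed
    qed
    from main_step[OF der dc sN KT cst this] p
    obtain r where "r \<in> PV_closure D (PV_tower D K N)" "poly p r = 0" by auto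
    then show "\<exists>x\<in>PV_infty D K. poly p x = 0" using inf[of "Suc N"] by auto
  qed
  show "\<forall>E. PV_ext D (PV_infty D K) E \<longrightarrow> E = PV_infty D K"
  proof (intro allI impI)
    fix E assume "PV_ext D (PV_infty D K) E"
    then obtain n A Z where A: "A \<in> carrier_mat n n" and Z: "Z \<in> carrier_mat n n" and dZ: "det Z \<noteq> 0"
      and AF: "\<forall>i<n. \<forall>j<n. A $$ (i, j) \<in> PV_infty D K" and eq: "map_mat D Z = A * Z"
      and E: "E = diff_gen D (PV_infty D K) {Z $$ (i, j) | i j. i < n \<and> j < n}"
      unfolding PV_ext_def by blast
    have "{A $$ (i, j) | i j. i < n \<and> j < n} \<subseteq> (\<lambda>(i, j). A $$ (i, j)) ` ({..<n} \<times> {..<n})"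
      by auto
    then have "finite {A $$ (i, j) | i j. i < n \<and> j < n}" by (rule finite_subset) simp
    moreover have "{A $$ (i, j) | i j. i < n \<and> j < n} \<subseteq> PV_infty D K" using AF by auto
    ultimately obtain N where N: "{A $$ (i, j) | i j. i < n \<and> j < n} \<subseteq> PV_tower D K N"
      using finite_in_tower by blast
    have AN: "\<forall>i<n. \<forall>j<n. A $$ (i, j) \<in> PV_tower D K N" using N by blast
    have sN: "diff_subfield D (PV_tower D K N)" by (rule tower_sub[OF K])
    have "{Z $$ (i, j) | i j. i < n \<and> j < n} \<subseteq> PV_tower D K (Suc N)"
      using pv_in_closure[OF sN KT cst A Z dZ AN eq] by simp
    then have "{Z $$ (i, j) | i j. i < n \<and> j < n} \<subseteq> PV_infty D K" using inf[of "Suc N"] by blast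
    then show "E = PV_infty D K" unfolding E by (rule diff_gen_self[OF infty_sub[OF K]])
  qed
qed

end
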